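(* Let $\mathcal R$ be a $Z$-regulus in $\mathcal G$ and let $L$ be a directrix of $\mathcal R$. Then the set of all points of $L$ which are contained in some element of $\mathcal R$ is a $Z$-subline of $L$.
   Context: $K$ is a (not necessarily commutative) field with centre $Z$, and $V$ is a left vector space over $K$ of arbitrary (possibly infinite) dimension with $\dim V>2$. $\mathcal G:=\{X\le V\mid X\cong V/X\}$, assumed nonempty. Points are $1$-dimensional and lines $2$-dimensional subspaces; two subspaces meet if they have a common point. $X,Y\in\mathcal G$ are distant if $V=X\oplus Y$. A $Z$-regulus is a subset $\mathcal R\subseteq\mathcal G$ such that (R1) its elements are mutually distant and $|\mathcal R|\ge3$; (R2) if a line meets three mutually distinct elements of $\mathcal R$ then it meets all elements of $\mathcal R$; (R3) $\mathcal R$ is not properly contained in any subset of $\mathcal G$ satisfying (R1) and (R2). A directrix of $\mathcal R$ is a line meeting all elements of $\mathcal R$. A $Z$-subline (or $Z$-chain) of a line $L$ is a set of points of the form $\{K(xa+yb)\mid (x,y)\in Z^2\setminus\{(0,0)\}\}$, where $a,b$ is a basis of $L$. *)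

theory Defs
  imports Main
begin

text \<open>A left vector space V (the whole type 'v) over a skew field K (type 'k) with
  scalar multiplication sc.\<close>

definition left_vs :: "('k::division_ring \<Rightarrow> 'v::ab_group_add \<Rightarrow> 'v) \<Rightarrow> bool" where
  "left_vs sc \<longleftrightarrow>
     (\<forall>a x y. sc a (x + y) = sc a x + sc a y) \<and>
     (\<forall>a b x. sc (a + b) x = sc a x + sc b x) \<and>
     (\<forall>a b x. sc a (sc b x) = sc (a * b) x) \<and>
     (\<forall>x. sc 1 x = x)"

definition centre :: "'k::division_ring set" where
  "centre = {z. \<forall>k. z * k = k * z}"

definition lvs_subspace :: "('k::division_ring \<Rightarrow> 'v::ab_group_add \<Rightarrow> 'v) \<Rightarrow> 'v set \<Rightarrow> bool" where
  "lvs_subspace sc X \<longleftrightarrow> 0 \<in> X \<and> (\<forall>x\<in>X. \<forall>y\<in>X. x + y \<in> X) \<and> (\<forall>k. \<forall>x\<in>X. sc k x \<in> X)"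

definition dim_gt_2 :: "('k::division_ring \<Rightarrow> 'v::ab_group_add \<Rightarrow> 'v) \<Rightarrow> bool" where
  "dim_gt_2 sc \<longleftrightarrow> (\<exists>u v w. \<forall>a b c. sc a u + sc b v + sc c w = 0 \<longrightarrow> a = 0 \<and> b = 0 \<and> c = 0)"

definition coset :: "'v::ab_group_add set \<Rightarrow> 'v \<Rightarrow> 'v set" where
  "coset X v = {v + y | y. y \<in> X}"

text \<open>X is isomorphic (as a left K-space) to the quotient space V/X, whose elements are
  the cosets v + X, with (v+X)+(w+X) = (v+w)+X and k(v+X) = kv+X.\<close>
definition iso_quot :: "('k::division_ring \<Rightarrow> 'v::ab_group_add \<Rightarrow> 'v) \<Rightarrow> 'v set \<Rightarrow> bool" where
  "iso_quot sc X \<longleftrightarrow> (\<exists>\<phi>. bij_betw \<phi> X (range (coset X)) \<and>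
      (\<forall>x\<in>X. \<forall>y\<in>X. \<forall>u\<in>\<phi> x. \<forall>w\<in>\<phi> y. \<phi> (x + y) = coset X (u + w)) \<and>
      (\<forall>k. \<forall>x\<in>X. \<forall>u\<in>\<phi> x. \<phi> (sc k x) = coset X (sc k u)))"

definition Gset :: "('k::division_ring \<Rightarrow> 'v::ab_group_add \<Rightarrow> 'v) \<Rightarrow> 'v set set" where
  "Gset sc = {X. lvs_subspace sc X \<and> iso_quot sc X}"

definition pt_of :: "('k::division_ring \<Rightarrow> 'v::ab_group_add \<Rightarrow> 'v) \<Rightarrow> 'v \<Rightarrow> 'v set" where
  "pt_of sc v = {sc k v | k. True}"

definition is_point :: "('k::division_ring \<Rightarrow> 'v::ab_group_add \<Rightarrow> 'v) \<Rightarrow> 'v set \<Rightarrow> bool" where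
  "is_point sc P \<longleftrightarrow> (\<exists>v. v \<noteq> 0 \<and> P = pt_of sc v)"

definition indep2 :: "('k::division_ring \<Rightarrow> 'v::ab_group_add \<Rightarrow> 'v) \<Rightarrow> 'v \<Rightarrow> 'v \<Rightarrow> bool" where
  "indep2 sc a b \<longleftrightarrow> (\<forall>x y. sc x a + sc y b = 0 \<longrightarrow> x = 0 \<and> y = 0)"

definition span2 :: "('k::division_ring \<Rightarrow> 'v::ab_group_add \<Rightarrow> 'v) \<Rightarrow> 'v \<Rightarrow> 'v \<Rightarrow> 'v set" where
  "span2 sc a b = {sc x a + sc y b | x y. True}"

definition is_line :: "('k::division_ring \<Rightarrow> 'v::ab_group_add \<Rightarrow> 'v) \<Rightarrow> 'v set \<Rightarrow> bool" where
  "is_line sc L \<longleftrightarrow> (\<exists>a b. indep2 sc a b \<and> L = span2 sc a b)"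

definition meets :: "('k::division_ring \<Rightarrow> 'v::ab_group_add \<Rightarrow> 'v) \<Rightarrow> 'v set \<Rightarrow> 'v set \<Rightarrow> bool" where
  "meets sc X Y \<longleftrightarrow> (\<exists>P. is_point sc P \<and> P \<subseteq> X \<and> P \<subseteq> Y)"

definition distant :: "'v::ab_group_add set \<Rightarrow> 'v set \<Rightarrow> bool" where
  "distant X Y \<longleftrightarrow> (\<forall>v. \<exists>x\<in>X. \<exists>y\<in>Y. v = x + y) \<and> X \<inter> Y = {0}"

definition R1 :: "('k::division_ring \<Rightarrow> 'v::ab_group_add \<Rightarrow> 'v) \<Rightarrow> 'v set set \<Rightarrow> bool" where
  "R1 sc R \<longleftrightarrow> (\<forall>X\<in>R. \<forall>Y\<in>R. X \<noteq> Y \<longrightarrow> distant X Y) \<and>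
               (\<exists>A B C. A \<in> R \<and> B \<in> R \<and> C \<in> R \<and> A \<noteq> B \<and> A \<noteq> C \<and> B \<noteq> C)"

definition R2 :: "('k::division_ring \<Rightarrow> 'v::ab_group_add \<Rightarrow> 'v) \<Rightarrow> 'v set set \<Rightarrow> bool" where
  "R2 sc R \<longleftrightarrow> (\<forall>L. is_line sc L \<longrightarrow>
      (\<exists>A B C. A \<in> R \<and> B \<in> R \<and> C \<in> R \<and> A \<noteq> B \<and> A \<noteq> C \<and> B \<noteq> C \<and>
               meets sc L A \<and> meets sc L B \<and> meets sc L C) \<longrightarrow>
      (\<forall>X\<in>R. meets sc L X))"

definition Z_regulus :: "('k::division_ring \<Rightarrow> 'v::ab_group_add \<Rightarrow> 'v) \<Rightarrow> 'v set set \<Rightarrow> bool" where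
  "Z_regulus sc R \<longleftrightarrow> R \<subseteq> Gset sc \<and> R1 sc R \<and> R2 sc R \<and>
     \<not> (\<exists>R'. R \<subset> R' \<and> R' \<subseteq> Gset sc \<and> R1 sc R' \<and> R2 sc R')"

definition directrix :: "('k::division_ring \<Rightarrow> 'v::ab_group_add \<Rightarrow> 'v) \<Rightarrow> 'v set set \<Rightarrow> 'v set \<Rightarrow> bool" where
  "directrix sc R L \<longleftrightarrow> is_line sc L \<and> (\<forall>X\<in>R. meets sc L X)"

definition Z_subline :: "('k::division_ring \<Rightarrow> 'v::ab_group_add \<Rightarrow> 'v) \<Rightarrow> 'v set \<Rightarrow> 'v set set \<Rightarrow> bool" where
  "Z_subline sc L S \<longleftrightarrow> (\<exists>a b. indep2 sc a b \<and> L = span2 sc a b \<and>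
      S = {pt_of sc (sc x a + sc y b) | x y. x \<in> centre \<and> y \<in> centre \<and> (x, y) \<noteq> (0, 0)})"

end

theory Submission
  imports Defs
begin


locale lvs =
  fixes sc :: "'k::division_ring \<Rightarrow> 'v::ab_group_add \<Rightarrow> 'v"
  assumes lvs: "left_vs sc"
begin

lemma sc_add_right: "sc a (x + y) = sc a x + sc a y" using lvs unfolding left_vs_def by blast
lemma sc_add_left: "sc (a + b) x = sc a x + sc b x" using lvs unfolding left_vs_def by blast
lemma sc_assoc[simp]: "sc a (sc b x) = sc (a * b) x" using lvs unfolding left_vs_def by blast
lemma sc_one[simp]: "sc 1 x = x" using lvs unfolding left_vs_def by blast

lemma sc_zero_left[simp]: "sc 0 x = 0"
proof -
  have "sc 0 x = sc 0 x + sc 0 x" using sc_add_left[of 0 0 x] by simp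
  thus ?thesis by simp
qed
lemma sc_zero_right[simp]: "sc a 0 = 0"
proof -
  have "sc a 0 = sc a 0 + sc a 0" using sc_add_right[of a 0 0] by simp
  thus ?thesis by simp
qed
lemma sc_minus_left: "sc (- a) x = - sc a x"
proof -
  have "sc a x + sc (-a) x = 0" using sc_add_left[of a "-a" x] by simp
  thus ?thesis by (metis add_eq_0_iff)
qed
lemma sc_minus_right: "sc a (- x) = - sc a x"
proof -
  have "sc a x + sc a (-x) = 0" using sc_add_right[of a x "-x"] by simp
  thus ?thesis by (metis add_eq_0_iff)
qed
lemma sc_diff_left: "sc (a - b) x = sc a x - sc b x"
  using sc_add_left[of a "-b" x] by (simp add: sc_minus_left)
lemma sc_diff_right: "sc a (x - y) = sc a x - sc a y"
  using sc_add_right[of a x "-y"] by (simp add: sc_minus_right)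
lemma sc_eq_0: "sc a x = 0 \<Longrightarrow> a = 0 \<or> x = 0"
proof (rule ccontr)
  assume h: "sc a x = 0" "\<not> (a = 0 \<or> x = 0)"
  hence "x = sc (inverse a * a) x" by simp
  also have "\<dots> = sc (inverse a) (sc a x)" by simp
  finally show False using h by simp
qed
lemma sc_cancel: "sc a x = sc a y \<Longrightarrow> a \<noteq> 0 \<Longrightarrow> x = y"
  using sc_eq_0[of a "x - y"] by (simp add: sc_diff_right)
lemma sc_cancel_left: "sc a x = sc b x \<Longrightarrow> x \<noteq> 0 \<Longrightarrow> a = b"
  using sc_eq_0[of "a - b" x] by (simp add: sc_diff_left)

lemmas sc_lin = sc_add_right sc_add_left sc_diff_left sc_diff_right sc_minus_left sc_minus_right

lemma sub_0: "lvs_subspace sc X \<Longrightarrow> 0 \<in> X" by (simp add: lvs_subspace_def)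
lemma sub_add: "lvs_subspace sc X \<Longrightarrow> x \<in> X \<Longrightarrow> y \<in> X \<Longrightarrow> x + y \<in> X" by (simp add: lvs_subspace_def)
lemma sub_sc: "lvs_subspace sc X \<Longrightarrow> x \<in> X \<Longrightarrow> sc k x \<in> X" by (simp add: lvs_subspace_def)
lemma sub_minus: "lvs_subspace sc X \<Longrightarrow> x \<in> X \<Longrightarrow> - x \<in> X"
  using sub_sc[of X x "-1"] by (simp add: sc_minus_left)
lemma sub_diff: "lvs_subspace sc X \<Longrightarrow> x \<in> X \<Longrightarrow> y \<in> X \<Longrightarrow> x - y \<in> X"
  using sub_add[of X x "-y"] sub_minus[of X y] by simp

lemma pt_mem: "v \<in> pt_of sc v" unfolding pt_of_def by (metis (mono_tags, lifting) mem_Collect_eq sc_one)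
lemma pt_sub: "lvs_subspace sc X \<Longrightarrow> v \<in> X \<Longrightarrow> pt_of sc v \<subseteq> X"
  unfolding pt_of_def using sub_sc by blast
lemma pt_point: "v \<noteq> 0 \<Longrightarrow> is_point sc (pt_of sc v)" unfolding is_point_def by blast
lemma pt_scale: assumes "k \<noteq> 0" shows "pt_of sc (sc k v) = pt_of sc v"
proof
  show "pt_of sc (sc k v) \<subseteq> pt_of sc v" unfolding pt_of_def by auto
  show "pt_of sc v \<subseteq> pt_of sc (sc k v)" unfolding pt_of_def
  proof clarify
    fix j
    have "sc j v = sc (j * inverse k) (sc k v)" using assms by (simp add: mult.assoc)
    thus "\<exists>k'. sc j v = sc k' (sc k v) \<and> True" by blast
  qed
qed

lemma meets_iff:
  assumes "lvs_subspace sc X" "lvs_subspace sc Y"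
  shows "meets sc X Y \<longleftrightarrow> (\<exists>v. v \<noteq> 0 \<and> v \<in> X \<and> v \<in> Y)"
proof
  assume "meets sc X Y"
  then obtain v where "v \<noteq> 0" "pt_of sc v \<subseteq> X" "pt_of sc v \<subseteq> Y"
    unfolding meets_def is_point_def by blast
  thus "\<exists>v. v \<noteq> 0 \<and> v \<in> X \<and> v \<in> Y" using pt_mem by blast
next
  assume "\<exists>v. v \<noteq> 0 \<and> v \<in> X \<and> v \<in> Y"
  then obtain v where "v \<noteq> 0" "v \<in> X" "v \<in> Y" by blast
  thus "meets sc X Y" unfolding meets_def using pt_point pt_sub assms by blast
qed

lemma span2_mem: "x \<in> span2 sc a b \<longleftrightarrow> (\<exists>s t. x = sc s a + sc t b)"
  unfolding span2_def by blast
lemma span2_sub: "lvs_subspace sc (span2 sc a b)"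
proof -
  have 1: "0 \<in> span2 sc a b" unfolding span2_mem by (rule exI[of _ 0], rule exI[of _ 0]) simp
  have 2: "x + y \<in> span2 sc a b" if hx: "x \<in> span2 sc a b" and hy: "y \<in> span2 sc a b" for x y
  proof -
    obtain s t s' t' where "x = sc s a + sc t b" "y = sc s' a + sc t' b" using hx hy unfolding span2_mem by blast
    hence "x + y = sc (s + s') a + sc (t + t') b" by (simp add: sc_lin algebra_simps)
    thus ?thesis using span2_mem by blast
  qed
  have 3: "sc k x \<in> span2 sc a b" if hx: "x \<in> span2 sc a b" for x k
  proof -
    obtain s t where "x = sc s a + sc t b" using hx unfolding span2_mem by blast
    hence "sc k x = sc (k * s) a + sc (k * t) b" by (simp add: sc_lin)
    thus ?thesis using span2_mem by blast
  qed
  show ?thesis unfolding lvs_subspace_def using 1 2 3 by blast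
qed
lemma span2_a: "a \<in> span2 sc a b" unfolding span2_mem by (rule exI[of _ 1], rule exI[of _ 0]) simp
lemma span2_b: "b \<in> span2 sc a b" unfolding span2_mem by (rule exI[of _ 0], rule exI[of _ 1]) simp
lemma span2_subset: "lvs_subspace sc X \<Longrightarrow> a \<in> X \<Longrightarrow> b \<in> X \<Longrightarrow> span2 sc a b \<subseteq> X"
  unfolding span2_def using sub_add sub_sc by blast
lemma line_sub: "is_line sc M \<Longrightarrow> lvs_subspace sc M"
  unfolding is_line_def using span2_sub by blast

lemma indep2_nz: "indep2 sc a b \<Longrightarrow> a \<noteq> 0 \<and> b \<noteq> 0"
  unfolding indep2_def using sc_one sc_zero_left
  by (metis add.right_neutral add_0 one_neq_zero)

end


context lvs
begin

lemma two_dim: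
  assumes h2: "w2 \<in> span2 sc a b" and h3: "w3 \<in> span2 sc a b" and ind: "indep2 sc w2 w3"
  shows "a \<in> span2 sc w2 w3 \<and> b \<in> span2 sc w2 w3"
proof -
  let ?S = "span2 sc w2 w3"
  have S: "lvs_subspace sc ?S" by (rule span2_sub)
  have w2S: "w2 \<in> ?S" and w3S: "w3 \<in> ?S" by (rule span2_a, rule span2_b)
  obtain x2 y2 where e2: "w2 = sc x2 a + sc y2 b" using h2 unfolding span2_mem by blast
  obtain x3 y3 where e3: "w3 = sc x3 a + sc y3 b" using h3 unfolding span2_mem by blast
  have nz: "w2 \<noteq> 0" "w3 \<noteq> 0" using indep2_nz[OF ind] by auto
  show ?thesis
  proof (cases "x2 = 0")
    case False
    define e where "e = y3 - x3 * inverse x2 * y2"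
    have z: "w3 - sc (x3 * inverse x2) w2 = sc e b"
      using False unfolding e2 e3 e_def by (simp add: sc_lin mult.assoc)
    have "e \<noteq> 0"
    proof
      assume "e = 0"
      hence "sc (- (x3 * inverse x2)) w2 + sc 1 w3 = 0" using z by (simp add: sc_minus_left)
      thus False using ind unfolding indep2_def by fastforce
    qed
    have bS: "b \<in> ?S"
    proof -
      have "b = sc (inverse e) (w3 - sc (x3 * inverse x2) w2)" using z \<open>e \<noteq> 0\<close> by simp
      thus ?thesis using S w2S w3S sub_sc sub_diff by metis
    qed
    have "a = sc (inverse x2) (w2 - sc y2 b)" using False unfolding e2 by simp
    hence "a \<in> ?S" using S w2S bS sub_sc sub_diff by metis
    thus ?thesis using bS by blast
  next
    case True
    hence w2b: "w2 = sc y2 b" using e2 by simp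
    hence "y2 \<noteq> 0" using nz by auto
    hence bS: "b \<in> ?S" using w2b S w2S sub_sc
      by (metis left_inverse sc_assoc sc_one)
    have "x3 \<noteq> 0"
    proof
      assume "x3 = 0"
      hence "w3 = sc (y3 * inverse y2) w2" using w2b e3 \<open>y2 \<noteq> 0\<close> by (simp add: mult.assoc)
      hence "sc (- (y3 * inverse y2)) w2 + sc 1 w3 = 0" by (simp add: sc_minus_left)
      thus False using ind unfolding indep2_def by fastforce
    qed
    have "a = sc (inverse x3) (w3 - sc y3 b)" using \<open>x3 \<noteq> 0\<close> unfolding e3 by simp
    hence "a \<in> ?S" using S w3S bS sub_sc sub_diff by metis
    thus ?thesis using bS by blast
  qed
qed

lemma line_eq:
  assumes "is_line sc M" "w2 \<in> M" "w3 \<in> M" "indep2 sc w2 w3"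
  shows "M = span2 sc w2 w3"
proof
  show "span2 sc w2 w3 \<subseteq> M" using assms line_sub span2_subset by blast
  obtain a b where M: "M = span2 sc a b" using assms(1) unfolding is_line_def by blast
  have "a \<in> span2 sc w2 w3 \<and> b \<in> span2 sc w2 w3" using two_dim assms M by blast
  thus "M \<subseteq> span2 sc w2 w3" unfolding M using span2_subset span2_sub by blast
qed

lemma three_in_two:
  assumes "u \<in> span2 sc a b" "v \<in> span2 sc a b" "w \<in> span2 sc a b"
  shows "\<exists>x y z. sc x u + sc y v + sc z w = 0 \<and> \<not> (x = 0 \<and> y = 0 \<and> z = 0)"
proof (cases "indep2 sc u v")
  case True
  hence "a \<in> span2 sc u v \<and> b \<in> span2 sc u v" using two_dim assms by blast
  hence "span2 sc a b \<subseteq> span2 sc u v" using span2_subset span2_sub by blast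
  hence "w \<in> span2 sc u v" using assms(3) by blast
  then obtain s t where "w = sc s u + sc t v" unfolding span2_mem by blast
  hence "sc s u + sc t v + sc (-1) w = 0" by (simp add: sc_minus_left)
  thus ?thesis by fastforce
next
  case False
  then obtain x y where "sc x u + sc y v = 0" "\<not> (x = 0 \<and> y = 0)" unfolding indep2_def by blast
  hence "sc x u + sc y v + sc 0 w = 0" by simp
  thus ?thesis using \<open>\<not> (x = 0 \<and> y = 0)\<close> by blast
qed

lemma coset_image:
  assumes add: "\<And>x y. \<sigma> (x + y) = \<sigma> x + \<sigma> y"
  shows "\<sigma> ` coset X v = coset (\<sigma> ` X) (\<sigma> v)"
proof
  show "\<sigma> ` coset X v \<subseteq> coset (\<sigma> ` X) (\<sigma> v)" unfolding coset_def using add by auto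
  show "coset (\<sigma> ` X) (\<sigma> v) \<subseteq> \<sigma> ` coset X v"
  proof
    fix z assume "z \<in> coset (\<sigma> ` X) (\<sigma> v)"
    then obtain y where "y \<in> X" "z = \<sigma> v + \<sigma> y" unfolding coset_def by blast
    hence "z = \<sigma> (v + y)" "v + y \<in> coset X v" using add unfolding coset_def by auto
    thus "z \<in> \<sigma> ` coset X v" by blast
  qed
qed

lemma Gset_transfer:
  assumes XG: "X \<in> Gset sc"
    and add: "\<And>x y. \<sigma> (x + y) = \<sigma> x + \<sigma> y"
    and hom: "\<And>k x. \<sigma> (sc k x) = sc k (\<sigma> x)"
    and bij: "bij \<sigma>"
  shows "\<sigma> ` X \<in> Gset sc"
proof -
  let ?Y = "\<sigma> ` X"
  let ?i = "inv \<sigma>"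
  have sX: "lvs_subspace sc X" and iq: "iso_quot sc X" using XG unfolding Gset_def by auto
  have s0: "\<sigma> 0 = 0" using add[of 0 0] by simp
  have ii: "?i (\<sigma> x) = x" for x using bij by (simp add: bij_is_inj)
  have si: "\<sigma> (?i y) = y" for y using bij by (simp add: bij_is_surj surj_f_inv_f)
  have sY: "lvs_subspace sc ?Y" unfolding lvs_subspace_def
  proof (intro conjI ballI allI)
    show "0 \<in> ?Y" using s0 sub_0[OF sX] by force
  next
    fix x y assume "x \<in> ?Y" "y \<in> ?Y"
    then obtain x' y' where "x' \<in> X" "y' \<in> X" "x = \<sigma> x'" "y = \<sigma> y'" by blast
    thus "x + y \<in> ?Y" using add sub_add[OF sX] by (metis image_eqI)
  next
    fix k x assume "x \<in> ?Y"
    then obtain x' where "x' \<in> X" "x = \<sigma> x'" by blast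
    thus "sc k x \<in> ?Y" using hom sub_sc[OF sX] by (metis image_eqI)
  qed
  obtain \<phi> where bphi: "bij_betw \<phi> X (range (coset X))"
    and padd: "\<forall>x\<in>X. \<forall>y\<in>X. \<forall>u\<in>\<phi> x. \<forall>w\<in>\<phi> y. \<phi> (x + y) = coset X (u + w)"
    and psc: "\<forall>k. \<forall>x\<in>X. \<forall>u\<in>\<phi> x. \<phi> (sc k x) = coset X (sc k u)"
    using iq unfolding iso_quot_def by blast
  define \<psi> where "\<psi> y = \<sigma> ` \<phi> (?i y)" for y
  have iadd: "?i (x + y) = ?i x + ?i y" for x y by (metis add ii si)
  have isc: "?i (sc k x) = sc k (?i x)" for k x by (metis hom ii si)
  have iY: "y \<in> ?Y \<Longrightarrow> ?i y \<in> X" for y using ii by auto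
  have injs: "inj \<sigma>" using bij bij_is_inj by blast
  have "bij_betw \<psi> ?Y (range (coset ?Y))"
    unfolding bij_betw_def
  proof
    show "inj_on \<psi> ?Y"
    proof (rule inj_onI)
      fix y1 y2 assume h: "y1 \<in> ?Y" "y2 \<in> ?Y" "\<psi> y1 = \<psi> y2"
      hence "\<phi> (?i y1) = \<phi> (?i y2)" unfolding \<psi>_def using injs by (simp add: inj_image_eq_iff)
      hence "?i y1 = ?i y2" using bphi iY h unfolding bij_betw_def inj_on_def by blast
      thus "y1 = y2" by (metis si)
    qed
    show "\<psi> ` ?Y = range (coset ?Y)"
    proof
      show "\<psi> ` ?Y \<subseteq> range (coset ?Y)"
      proof
        fix S assume "S \<in> \<psi> ` ?Y"
        then obtain y where y: "y \<in> ?Y" "S = \<psi> y" by blast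
        have "\<phi> (?i y) \<in> range (coset X)" using bphi iY[OF y(1)] unfolding bij_betw_def by blast
        then obtain v where "\<phi> (?i y) = coset X v" by blast
        hence "S = coset ?Y (\<sigma> v)" using y coset_image[OF add] unfolding \<psi>_def by simp
        thus "S \<in> range (coset ?Y)" by blast
      qed
      show "range (coset ?Y) \<subseteq> \<psi> ` ?Y"
      proof
        fix S assume "S \<in> range (coset ?Y)"
        then obtain w where w: "S = coset ?Y w" by blast
        have "coset X (?i w) \<in> \<phi> ` X" using bphi unfolding bij_betw_def by blast
        then obtain x where x: "x \<in> X" "\<phi> x = coset X (?i w)" by blast
        have "\<psi> (\<sigma> x) = S" unfolding \<psi>_def ii x(2) w using coset_image[OF add] si by simp
        thus "S \<in> \<psi> ` ?Y" using x(1) by blast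
      qed
    qed
  qed
  moreover have "\<forall>x\<in>?Y. \<forall>y\<in>?Y. \<forall>u\<in>\<psi> x. \<forall>w\<in>\<psi> y. \<psi> (x + y) = coset ?Y (u + w)"
  proof (intro ballI)
    fix x y u w assume h: "x \<in> ?Y" "y \<in> ?Y" "u \<in> \<psi> x" "w \<in> \<psi> y"
    then obtain u0 w0 where u0: "u0 \<in> \<phi> (?i x)" "u = \<sigma> u0" and w0: "w0 \<in> \<phi> (?i y)" "w = \<sigma> w0"
      unfolding \<psi>_def by blast
    have "\<phi> (?i x + ?i y) = coset X (u0 + w0)" using padd iY h u0 w0 by blast
    thus "\<psi> (x + y) = coset ?Y (u + w)" unfolding \<psi>_def iadd using coset_image[OF add] u0 w0 add by simp
  qed
  moreover have "\<forall>k. \<forall>x\<in>?Y. \<forall>u\<in>\<psi> x. \<psi> (sc k x) = coset ?Y (sc k u)"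
  proof (intro allI ballI)
    fix k x u assume h: "x \<in> ?Y" "u \<in> \<psi> x"
    then obtain u0 where u0: "u0 \<in> \<phi> (?i x)" "u = \<sigma> u0" unfolding \<psi>_def by blast
    have "\<phi> (sc k (?i x)) = coset X (sc k u0)" using psc iY h u0 by blast
    thus "\<psi> (sc k x) = coset ?Y (sc k u)" unfolding \<psi>_def isc using coset_image[OF add] u0 hom by simp
  qed
  ultimately have "iso_quot sc ?Y" unfolding iso_quot_def by blast
  thus ?thesis using sY unfolding Gset_def by blast
qed

end


locale frame = lvs +
  fixes A B and f
  assumes sA: "lvs_subspace sc A" and sB: "lvs_subspace sc B" and dAB: "distant A B"
    and f_in: "a \<in> A \<Longrightarrow> f a \<in> B"
    and f_add: "f (x + y) = f x + f y"
    and f_sc: "f (sc k x) = sc k (f x)"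
    and f_inj: "a \<in> A \<Longrightarrow> f a = 0 \<Longrightarrow> a = 0"
    and f_surj: "b \<in> B \<Longrightarrow> \<exists>a\<in>A. f a = b"

context lvs
begin

lemma frame_exists:
  assumes sA: "lvs_subspace sc A" and sB: "lvs_subspace sc B" and sC: "lvs_subspace sc C"
    and dAB: "distant A B" and dAC: "distant A C" and dBC: "distant B C"
  shows "\<exists>f. frame sc A B f \<and> C = {a + f a | a. a \<in> A}"
proof -
  have ex: "\<exists>b. b \<in> B \<and> v + b \<in> C" for v
  proof -
    obtain b c where "b \<in> B" "c \<in> C" "v = b + c" using dBC unfolding distant_def by blast
    hence "- b \<in> B" "v + - b \<in> C" using sub_minus[OF sB] by auto
    thus ?thesis by blast
  qed
  have un: "b1 = b2" if "b1 \<in> B" "v + b1 \<in> C" "b2 \<in> B" "v + b2 \<in> C" for v b1 b2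
  proof -
    have "b1 - b2 \<in> B" using that sub_diff[OF sB] by blast
    moreover have "(v + b1) - (v + b2) \<in> C" using that sub_diff[OF sC] by blast
    ultimately have "b1 - b2 \<in> B \<inter> C" by simp
    thus ?thesis using dBC unfolding distant_def by auto
  qed
  define f where "f v = (SOME b. b \<in> B \<and> v + b \<in> C)" for v
  have fB: "f v \<in> B" and fC: "v + f v \<in> C" for v
    using someI_ex[OF ex[of v]] unfolding f_def by auto
  have fchar: "b \<in> B \<Longrightarrow> v + b \<in> C \<Longrightarrow> f v = b" for v b using un fB fC by blast
  have fr: "frame sc A B f"
  proof (unfold_locales)
    show "lvs_subspace sc A" "lvs_subspace sc B" "distant A B" by fact+
    show "f a \<in> B" for a by (rule fB)
    show "f (x + y) = f x + f y" for x y
    proof (rule fchar)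
      show "f x + f y \<in> B" using fB sub_add[OF sB] by blast
      have "(x + f x) + (y + f y) \<in> C" using fC sub_add[OF sC] by blast
      thus "x + y + (f x + f y) \<in> C" by (simp add: algebra_simps)
    qed
    show "f (sc k x) = sc k (f x)" for k x
    proof (rule fchar)
      show "sc k (f x) \<in> B" using fB sub_sc[OF sB] by blast
      have "sc k (x + f x) \<in> C" using fC sub_sc[OF sC] by blast
      thus "sc k x + sc k (f x) \<in> C" by (simp add: sc_add_right)
    qed
    show "a = 0" if "a \<in> A" "f a = 0" for a
    proof -
      have "a \<in> C" using fC[of a] that by simp
      thus ?thesis using that dAC unfolding distant_def by auto
    qed
    show "\<exists>a\<in>A. f a = b" if "b \<in> B" for b
    proof -
      obtain a' c where "a' \<in> A" "c \<in> C" "b = a' + c" using dAC unfolding distant_def by blast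
      hence "- a' \<in> A" "- a' + b \<in> C" using sub_minus[OF sA] by (auto simp: algebra_simps)
      thus ?thesis using fchar[OF that] by blast
    qed
  qed
  have "C = {a + f a | a. a \<in> A}"
  proof
    show "{a + f a | a. a \<in> A} \<subseteq> C" using fC by blast
    show "C \<subseteq> {a + f a | a. a \<in> A}"
    proof
      fix c assume "c \<in> C"
      then obtain a b where "a \<in> A" "b \<in> B" "c = a + b" using dAB unfolding distant_def by blast
      hence "f a = b" using fchar \<open>c \<in> C\<close> by blast
      thus "c \<in> {a + f a | a. a \<in> A}" using \<open>a \<in> A\<close> \<open>c = a + b\<close> by blast
    qed
  qed
  thus ?thesis using fr by blast
qed

end

context frame
begin

lemma f0[simp]: "f 0 = 0" using f_add[of 0 0] by simp
lemma f_minus: "f (- x) = - f x"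
proof -
  have "f x + f (- x) = 0" using f_add[of x "-x"] by simp
  thus ?thesis by (metis add_eq_0_iff)
qed
lemma f_diff: "f (x - y) = f x - f y" using f_add[of x "-y"] by (simp add: f_minus)

lemma AB0: "x \<in> A \<Longrightarrow> x \<in> B \<Longrightarrow> x = 0" using dAB unfolding distant_def by auto

lemma decomp:
  assumes "a \<in> A" "a' \<in> A" "b \<in> B" "b' \<in> B" "a + b = a' + b'"
  shows "a = a' \<and> b = b'"
proof -
  have "a - a' = b' - b" using assms(5) by (simp add: algebra_simps)
  moreover have "a - a' \<in> A" "b' - b \<in> B" using assms sub_diff sA sB by auto
  ultimately have "a - a' = 0" using AB0 by metis
  thus ?thesis using assms(5) by simp
qed

lemma f_inj2: "a \<in> A \<Longrightarrow> a' \<in> A \<Longrightarrow> f a = f a' \<Longrightarrow> a = a'"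
  using f_inj[of "a - a'"] sub_diff[OF sA] by (simp add: f_diff)

definition W where "W c = {sc c a + f a | a. a \<in> A}"

lemma W_mem: "v \<in> W c \<longleftrightarrow> (\<exists>a\<in>A. v = sc c a + f a)" unfolding W_def by blast

lemma W_eq:
  assumes "a \<in> A" "a' \<in> A" "sc c a + f a = sc d a' + f a'"
  shows "a = a' \<and> sc c a = sc d a"
proof -
  have "sc c a = sc d a' \<and> f a = f a'"
    using decomp[of "sc c a" "sc d a'" "f a" "f a'"] assms sub_sc[OF sA] f_in by blast
  thus ?thesis using f_inj2 assms by blast
qed

lemma centre_comm: "c \<in> centre \<Longrightarrow> c * k = k * c" unfolding centre_def by blast

lemma W_sub: assumes "c \<in> centre" shows "lvs_subspace sc (W c)"
proof -
  have 1: "0 \<in> W c" unfolding W_mem using sub_0[OF sA] by (intro bexI[of _ 0]) auto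
  have 2: "x + y \<in> W c" if hx: "x \<in> W c" and hy: "y \<in> W c" for x y
  proof -
    obtain a a' where "a \<in> A" "a' \<in> A" "x = sc c a + f a" "y = sc c a' + f a'"
      using hx hy unfolding W_mem by blast
    hence "a + a' \<in> A" "x + y = sc c (a + a') + f (a + a')"
      using sub_add[OF sA] by (auto simp: sc_add_right f_add algebra_simps)
    thus ?thesis unfolding W_mem by blast
  qed
  have 3: "sc k x \<in> W c" if hx: "x \<in> W c" for k x
  proof -
    obtain a where "a \<in> A" "x = sc c a + f a" using hx unfolding W_mem by blast
    hence "sc k a \<in> A" "sc k x = sc c (sc k a) + f (sc k a)"
      using sub_sc[OF sA] centre_comm[OF assms] by (auto simp: sc_add_right f_sc)
    thus ?thesis unfolding W_mem by blast
  qed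
  show ?thesis unfolding lvs_subspace_def using 1 2 3 by blast
qed

lemma W0: "W 0 = B"
proof
  show "W 0 \<subseteq> B" unfolding W_def using f_in by auto
  show "B \<subseteq> W 0" unfolding W_def using f_surj by force
qed

lemma W_nz: "a \<in> A \<Longrightarrow> a \<noteq> 0 \<Longrightarrow> sc c a + f a \<noteq> 0"
  using W_eq[of a 0 c 0] sub_0[OF sA] by auto

lemma dist_AW: "distant A (W c)"
  unfolding distant_def
proof
  show "\<forall>v. \<exists>x\<in>A. \<exists>y\<in>W c. v = x + y"
  proof
    fix v
    obtain a' b where "a' \<in> A" "b \<in> B" "v = a' + b" using dAB unfolding distant_def by blast
    then obtain a where a: "a \<in> A" "f a = b" using f_surj by blast
    have "v = (a' - sc c a) + (sc c a + f a)" using \<open>v = a' + b\<close> a by simp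
    moreover have "a' - sc c a \<in> A" using \<open>a' \<in> A\<close> a sub_diff[OF sA] sub_sc[OF sA] by blast
    ultimately show "\<exists>x\<in>A. \<exists>y\<in>W c. v = x + y" using a W_mem by blast
  qed
  show "A \<inter> W c = {0}"
  proof
    show "A \<inter> W c \<subseteq> {0}"
    proof
      fix v assume "v \<in> A \<inter> W c"
      then obtain a where a: "a \<in> A" "v = sc c a + f a" "v \<in> A" using W_mem by blast
      have "v + 0 = sc c a + f a" using a by simp
      hence "f a = 0" using decomp[of v "sc c a" 0 "f a"] a sub_sc[OF sA] sub_0[OF sB] f_in by metis
      hence "a = 0" using f_inj a by blast
      thus "v \<in> {0}" using a by simp
    qed
    show "{0} \<subseteq> A \<inter> W c" using sub_0[OF sA] W_mem by (force intro: bexI[of _ 0])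
  qed
qed

lemma distant_sym: "distant X Y \<Longrightarrow> distant Y X"
  unfolding distant_def by (auto simp: algebra_simps) (metis add.commute)

lemma dist_WW: assumes "c \<noteq> d" shows "distant (W c) (W d)"
  unfolding distant_def
proof
  show "\<forall>v. \<exists>x\<in>W c. \<exists>y\<in>W d. v = x + y"
  proof
    fix v
    obtain a' b where "a' \<in> A" "b \<in> B" "v = a' + b" using dAB unfolding distant_def by blast
    then obtain a0 where a0: "a0 \<in> A" "f a0 = b" using f_surj by blast
    define a where "a = sc (inverse (c - d)) (a' - sc d a0)"
    define a2 where "a2 = a0 - a"
    have aA: "a \<in> A" "a2 \<in> A" unfolding a_def a2_def using a0 \<open>a' \<in> A\<close> sA
      by (meson sub_diff sub_sc)+
    have ca: "sc (c - d) a = a' - sc d a0" unfolding a_def using assms by simp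
    have "sc c a + sc d a2 = sc (c - d) a + sc d a0" unfolding a2_def by (simp add: sc_lin)
    hence 1: "sc c a + sc d a2 = a'" using ca by simp
    have "v = (sc c a + f a) + (sc d a2 + f a2)"
      using 1 \<open>v = a' + b\<close> a0 unfolding a2_def by (simp add: f_diff algebra_simps)
    thus "\<exists>x\<in>W c. \<exists>y\<in>W d. v = x + y" using aA W_mem by blast
  qed
  show "W c \<inter> W d = {0}"
  proof
    show "W c \<inter> W d \<subseteq> {0}"
    proof
      fix v assume "v \<in> W c \<inter> W d"
      then obtain a a' where a: "a \<in> A" "a' \<in> A" "v = sc c a + f a" "v = sc d a' + f a'"
        using W_mem by blast
      hence "a = a'" "sc c a = sc d a" using W_eq by metis+
      hence "sc (c - d) a = 0" by (simp add: sc_diff_left)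
      hence "a = 0" using assms sc_eq_0[of "c - d" a] by auto
      thus "v \<in> {0}" using a by simp
    qed
    show "{0} \<subseteq> W c \<inter> W d" using sub_0[OF sA] W_mem by (force intro: bexI[of _ 0])
  qed
qed

end


context frame
begin

lemma W_memI: "a \<in> A \<Longrightarrow> sc c a + f a \<in> W c" unfolding W_mem by blast

lemma WW0: "q \<noteq> r \<Longrightarrow> v \<in> W q \<Longrightarrow> v \<in> W r \<Longrightarrow> v = 0"
  using dist_WW[of q r] unfolding distant_def by blast

lemma three:
  assumes M: "is_line sc M" and q: "q \<in> centre" and r: "r \<in> centre" and qr: "q \<noteq> r"
    and w2: "w2 \<in> M" "w2 \<in> W q" "w2 \<noteq> 0" and w3: "w3 \<in> M" "w3 \<in> W r" "w3 \<noteq> 0"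
    and w1: "w1 \<in> M" "w1 \<noteq> 0" and E: "w1 \<in> A \<or> (\<exists>p\<in>centre. p \<noteq> q \<and> p \<noteq> r \<and> w1 \<in> W p)"
  shows "\<exists>u\<in>A. u \<noteq> 0 \<and> u \<in> M \<and> f u \<in> M"
proof -
  have sM: "lvs_subspace sc M" using M line_sub by blast
  obtain a2 where a2: "a2 \<in> A" "w2 = sc q a2 + f a2" using w2 W_mem by blast
  obtain a3 where a3: "a3 \<in> A" "w3 = sc r a3 + f a3" using w3 W_mem by blast
  have a2nz: "a2 \<noteq> 0" using a2 w2(3) by auto
  have a3nz: "a3 \<noteq> 0" using a3 w3(3) by auto
  have ind: "indep2 sc w2 w3"
    unfolding indep2_def
  proof (intro allI impI)
    fix x y assume h: "sc x w2 + sc y w3 = 0"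
    have m: "sc x w2 \<in> W q" "sc (-y) w3 \<in> W r" using W_sub q r sub_sc w2 w3 by blast+
    have "sc x w2 = sc (-y) w3" using h by (simp add: sc_minus_left add_eq_0_iff2)
    hence "sc x w2 = 0" using WW0[OF qr] m by metis
    hence "x = 0" using sc_eq_0 w2(3) by blast
    then show "x = 0 \<and> y = 0" using h sc_eq_0 w3(3) by auto
  qed
  have Meq: "M = span2 sc w2 w3" using line_eq M w2 w3 ind by blast
  obtain l m where w1e: "w1 = sc l w2 + sc m w3" using w1(1) unfolding Meq span2_mem by blast
  have expand: "w1 = (sc (l*q) a2 + sc (m*r) a3) + f (sc l a2 + sc m a3)"
    using w1e a2 a3 by (simp add: sc_add_right f_add f_sc algebra_simps)
  have lm: "\<not> (l = 0 \<and> m = 0)" using w1e w1(2) by auto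
  have inA: "sc (l*q) a2 + sc (m*r) a3 \<in> A" "sc l a2 + sc m a3 \<in> A"
    using a2 a3 sA sub_add sub_sc by blast+
  obtain x y where xy: "sc x a2 + sc y a3 = 0" "\<not> (x = 0 \<and> y = 0)"
  proof (cases "w1 \<in> A")
    case True
    have "w1 + 0 = (sc (l*q) a2 + sc (m*r) a3) + f (sc l a2 + sc m a3)" using expand by simp
    hence "f (sc l a2 + sc m a3) = 0"
      using decomp[OF True inA(1) sub_0[OF sB] f_in[OF inA(2)]] by simp
    hence "sc l a2 + sc m a3 = 0" using f_inj inA by blast
    thus ?thesis using that lm by blast
  next
    case False
    then obtain p a1 where p: "p \<in> centre" "p \<noteq> q" "p \<noteq> r" "a1 \<in> A" "w1 = sc p a1 + f a1"
      using E W_mem by blast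
    have "sc p a1 = sc (l*q) a2 + sc (m*r) a3 \<and> f a1 = f (sc l a2 + sc m a3)"
      using decomp[OF sub_sc[OF sA p(4)] inA(1) f_in[OF p(4)] f_in[OF inA(2)]] p(5) expand by simp
    hence e1: "sc p a1 = sc (l*q) a2 + sc (m*r) a3" and e2: "a1 = sc l a2 + sc m a3"
      using f_inj2 p(4) inA by blast+
    have "sc p a1 = sc (l*p) a2 + sc (m*p) a3" unfolding e2 using centre_comm[OF p(1)]
      by (simp add: sc_add_right)
    hence "sc (l*p) a2 + sc (m*p) a3 - (sc (l*q) a2 + sc (m*r) a3) = 0" using e1 by simp
    hence "sc (l*(p - q)) a2 + sc (m*(p - r)) a3 = 0"
      by (simp add: algebra_simps sc_diff_left)
    moreover have "\<not> (l*(p - q) = 0 \<and> m*(p - r) = 0)" using lm p by auto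
    ultimately show ?thesis using that by blast
  qed
  have xnz: "x \<noteq> 0"
  proof
    assume "x = 0"
    hence "sc y a3 = 0" using xy by simp
    thus False using xy a3nz sc_eq_0 \<open>x = 0\<close> by blast
  qed
  define u where "u = sc x a2"
  have uA: "u \<in> A" unfolding u_def using a2 sA sub_sc by blast
  have unz: "u \<noteq> 0" unfolding u_def using xnz a2nz sc_eq_0 by blast
  have ya3: "sc (-y) a3 = u" using xy unfolding u_def by (simp add: sc_minus_left add_eq_0_iff2)
  have "sc x w2 = sc q u + f u" unfolding a2 u_def using centre_comm[OF q]
    by (simp add: sc_add_right f_sc)
  hence m1: "sc q u + f u \<in> M" using sM w2 sub_sc by metis
  have "sc (-y) w3 = sc r u + f u" unfolding a3 ya3[symmetric] using centre_comm[OF r]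
    by (simp add: sc_add_right f_sc)
  hence m2: "sc r u + f u \<in> M" using sM w3 sub_sc by metis
  have "sc (q - r) u = (sc q u + f u) - (sc r u + f u)" by (simp add: sc_diff_left)
  hence "sc (q - r) u \<in> M" using m1 m2 sM sub_diff by metis
  hence "sc (inverse (q - r)) (sc (q - r) u) \<in> M" using sM sub_sc by blast
  hence uM: "u \<in> M" using qr by simp
  have "f u = (sc q u + f u) - sc q u" by simp
  hence "f u \<in> M" using m1 uM sM sub_diff sub_sc by metis
  thus ?thesis using uA unz uM by blast
qed

definition fam where "fam X \<longleftrightarrow> X = A \<or> (\<exists>c\<in>centre. X = W c)"

lemma fam_sub: "fam X \<Longrightarrow> lvs_subspace sc X" unfolding fam_def using sA W_sub by blast

lemma fam_distant: assumes "fam X" "fam Y" "X \<noteq> Y" shows "distant X Y"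
proof (cases "X = A")
  case True
  then obtain c where "Y = W c" using assms unfolding fam_def by blast
  thus ?thesis using True dist_AW by simp
next
  case False
  then obtain c where c: "X = W c" using assms unfolding fam_def by blast
  show ?thesis
  proof (cases "Y = A")
    case True
    thus ?thesis using c distant_sym[OF dist_AW] by simp
  next
    case False
    then obtain d where "Y = W d" using assms unfolding fam_def by blast
    hence "c \<noteq> d" using c assms(3) by blast
    thus ?thesis using c \<open>Y = W d\<close> dist_WW by simp
  qed
qed

lemma meets_all:
  assumes M: "is_line sc M" and u: "u \<in> A" "u \<noteq> 0" "u \<in> M" "f u \<in> M" and X: "fam X"
  shows "meets sc M X"
proof -
  have sM: "lvs_subspace sc M" using M line_sub by blast
  show ?thesis using X unfolding fam_def
  proof
    assume "X = A" thus ?thesis using meets_iff[OF sM sA] u by blast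
  next
    assume "\<exists>c\<in>centre. X = W c"
    then obtain c where c: "c \<in> centre" "X = W c" by blast
    have "sc c u + f u \<in> M" using u sM sub_add sub_sc by blast
    moreover have "sc c u + f u \<in> W c" using W_memI u by blast
    moreover have "sc c u + f u \<noteq> 0" using W_nz u by blast
    ultimately show ?thesis using meets_iff[OF sM W_sub[OF c(1)]] c by blast
  qed
qed

lemma three':
  assumes M: "is_line sc M" and q: "q \<in> centre" and r: "r \<in> centre" and qr: "W q \<noteq> W r"
    and E: "fam E" "E \<noteq> W q" "E \<noteq> W r"
    and m: "meets sc M E" "meets sc M (W q)" "meets sc M (W r)"
  shows "\<exists>u\<in>A. u \<noteq> 0 \<and> u \<in> M \<and> f u \<in> M"
proof -
  have sM: "lvs_subspace sc M" using M line_sub by blast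
  obtain w1 where w1: "w1 \<noteq> 0" "w1 \<in> M" "w1 \<in> E" using m(1) meets_iff[OF sM fam_sub[OF E(1)]] by blast
  obtain w2 where w2: "w2 \<noteq> 0" "w2 \<in> M" "w2 \<in> W q" using m(2) meets_iff[OF sM W_sub[OF q]] by blast
  obtain w3 where w3: "w3 \<noteq> 0" "w3 \<in> M" "w3 \<in> W r" using m(3) meets_iff[OF sM W_sub[OF r]] by blast
  have qr': "q \<noteq> r" using qr by blast
  have "w1 \<in> A \<or> (\<exists>p\<in>centre. p \<noteq> q \<and> p \<noteq> r \<and> w1 \<in> W p)"
  proof (cases "E = A")
    case True thus ?thesis using w1 by simp
  next
    case False
    then obtain p where p: "p \<in> centre" "E = W p" using E(1) unfolding fam_def by blast
    hence "p \<noteq> q" "p \<noteq> r" using E by auto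
    thus ?thesis using p w1 by blast
  qed
  thus ?thesis using three[OF M q r qr' w2(2,3,1) w3(2,3,1) w1(2,1)] by blast
qed

lemma fam_W: "fam X \<Longrightarrow> X \<noteq> A \<Longrightarrow> \<exists>c\<in>centre. X = W c" unfolding fam_def by blast

lemma fam_three:
  assumes M: "is_line sc M" and F: "fam X1" "fam X2" "fam X3"
    and d: "X1 \<noteq> X2" "X1 \<noteq> X3" "X2 \<noteq> X3"
    and m: "meets sc M X1" "meets sc M X2" "meets sc M X3"
  shows "\<exists>u\<in>A. u \<noteq> 0 \<and> u \<in> M \<and> f u \<in> M"
proof (cases "X1 = A")
  case True
  obtain q where q: "q \<in> centre" "X2 = W q" using fam_W[OF F(2)] d True by blast
  obtain r where r: "r \<in> centre" "X3 = W r" using fam_W[OF F(3)] d True by blast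
  show ?thesis using three'[OF M q(1) r(1) _ F(1) _ _ m(1)] q r d m by simp
next
  case False
  then obtain p where p: "p \<in> centre" "X1 = W p" using fam_W[OF F(1)] by blast
  show ?thesis
  proof (cases "X2 = A")
    case True
    obtain r where r: "r \<in> centre" "X3 = W r" using fam_W[OF F(3)] d True by blast
    show ?thesis using three'[OF M p(1) r(1) _ F(2) _ _ m(2)] p r d m by simp
  next
    case False
    then obtain q where q: "q \<in> centre" "X2 = W q" using fam_W[OF F(2)] by blast
    show ?thesis using three'[OF M p(1) q(1) _ F(3) _ _ m(3)] p q d m by simp
  qed
qed

end


context frame
begin

lemma char:
  assumes sX: "lvs_subspace sc X" and dX: "distant A X"
    and lines: "\<And>a. a \<in> A \<Longrightarrow> a \<noteq> 0 \<Longrightarrow> meets sc (span2 sc a (f a)) X"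
    and a0: "a0 \<in> A" "a0 \<noteq> 0" and a': "a' \<in> A" "indep2 sc a0 a'"
  shows "\<exists>c\<in>centre. X = W c"
proof -
  have AX: "x \<in> A \<Longrightarrow> x \<in> X \<Longrightarrow> x = 0" for x using dX unfolding distant_def by blast
  define P where "P a t \<longleftrightarrow> sc t a + f a \<in> X" for a t
  have ex: "\<exists>t. P a t" if a: "a \<in> A" "a \<noteq> 0" for a
  proof -
    obtain w where w: "w \<noteq> 0" "w \<in> span2 sc a (f a)" "w \<in> X"
      using lines[OF a] meets_iff[OF span2_sub sX] by blast
    then obtain x y where wxy: "w = sc x a + sc y (f a)" unfolding span2_mem by blast
    have "y \<noteq> 0"
    proof
      assume "y = 0"
      hence "w \<in> A" using wxy a sA sub_sc by simp
      thus False using AX w by blast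
    qed
    have "sc (inverse y) w = sc (inverse y * x) a + f a"
      using \<open>y \<noteq> 0\<close> unfolding wxy by (simp add: sc_add_right)
    moreover have "sc (inverse y) w \<in> X" using w sX sub_sc by blast
    ultimately show ?thesis unfolding P_def by metis
  qed
  have uniq: "t = s" if a: "a \<in> A" "a \<noteq> 0" and h: "P a t" "P a s" for a t s
  proof -
    have "(sc t a + f a) - (sc s a + f a) \<in> X" using h sX sub_diff unfolding P_def by blast
    moreover have "(sc t a + f a) - (sc s a + f a) = sc (t - s) a" by (simp add: sc_diff_left)
    moreover have "sc (t - s) a \<in> A" using a sA sub_sc by blast
    ultimately have "sc (t - s) a = 0" using AX by metis
    thus ?thesis using sc_eq_0[of "t - s" a] a by auto
  qed
  have ind: "t = s" if ab: "a \<in> A" "b \<in> A" "indep2 sc a b" and h: "P a t" "P b s" for a b t s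
  proof -
    have "a + b \<noteq> 0"
    proof
      assume "a + b = 0"
      hence "sc 1 a + sc 1 b = 0" by simp
      thus False using ab(3) unfolding indep2_def by (metis one_neq_zero)
    qed
    moreover have abA: "a + b \<in> A" using ab sA sub_add by blast
    ultimately obtain u where u: "P (a + b) u" using ex by blast
    have "(sc t a + f a) + (sc s b + f b) - (sc u (a + b) + f (a + b)) \<in> X"
      using sub_diff[OF sX sub_add[OF sX h(1)[unfolded P_def] h(2)[unfolded P_def]] u[unfolded P_def]] .
    moreover have "(sc t a + f a) + (sc s b + f b) - (sc u (a + b) + f (a + b))
        = sc (t - u) a + sc (s - u) b" by (simp add: sc_diff_left sc_add_right f_add algebra_simps)
    moreover have "sc (t - u) a + sc (s - u) b \<in> A" using ab sA sub_sc sub_add by blast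
    ultimately have "sc (t - u) a + sc (s - u) b = 0" using AX by metis
    hence "t - u = 0 \<and> s - u = 0" using ab(3) unfolding indep2_def by blast
    thus ?thesis by simp
  qed
  define c where "c = (SOME t. P a0 t)"
  have Pc: "P a0 c" unfolding c_def using ex[OF a0] by (rule someI_ex)
  have a'nz: "a' \<noteq> 0" using indep2_nz[OF a'(2)] by blast
  obtain t' where t': "P a' t'" using ex[OF a'(1) a'nz] by blast
  have t'c: "t' = c" using ind[OF a0(1) a' Pc t'] by simp
  have all: "P a c" if a: "a \<in> A" "a \<noteq> 0" for a
  proof -
    obtain t where t: "P a t" using ex[OF a] by blast
    show ?thesis
    proof (cases "indep2 sc a a0")
      case True
      thus ?thesis using ind[OF a(1) a0(1) True t Pc] t by simp
    next
      case False
      then obtain x y where xy: "sc x a + sc y a0 = 0" "\<not> (x = 0 \<and> y = 0)" unfolding indep2_def by blast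
      have "x \<noteq> 0"
      proof
        assume "x = 0" hence "sc y a0 = 0" using xy by simp
        thus False using xy a0 sc_eq_0 \<open>x = 0\<close> by blast
      qed
      define k where "k = - (inverse x * y)"
      have "sc x a = - sc y a0" using xy by (simp add: add_eq_0_iff2)
      hence "sc (inverse x) (sc x a) = sc (inverse x) (- sc y a0)" by simp
      hence ak: "a = sc k a0" using \<open>x \<noteq> 0\<close> unfolding k_def by (simp add: sc_minus_right sc_minus_left)
      have "indep2 sc a a'" unfolding indep2_def
      proof (intro allI impI)
        fix p q assume "sc p a + sc q a' = 0"
        hence "sc (p * k) a0 + sc q a' = 0" unfolding ak by simp
        hence "p * k = 0" "q = 0" using a'(2) unfolding indep2_def by blast+
        moreover have "k \<noteq> 0" using ak a(2) by auto
        ultimately show "p = 0 \<and> q = 0" by simp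
      qed
      thus ?thesis using ind[OF a(1) a'(1) _ t t'] t t'c by simp
    qed
  qed
  have all0: "P a c" if a: "a \<in> A" for a
  proof (cases "a = 0")
    case True thus ?thesis unfolding P_def using sub_0[OF sX] by simp
  next
    case False thus ?thesis using all a by blast
  qed
  have cen: "c \<in> centre" unfolding centre_def
  proof (safe)
    fix k
    show "c * k = k * c"
    proof (cases "k = 0")
      case True thus ?thesis by simp
    next
      case False
      have ka: "sc k a0 \<in> A" using a0 sA sub_sc by blast
      have 1: "sc c (sc k a0) + f (sc k a0) \<in> X" using all0[OF ka] unfolding P_def .
      have 2: "sc k (sc c a0 + f a0) \<in> X" using Pc sX sub_sc unfolding P_def by blast
      have "sc k (sc c a0 + f a0) - (sc c (sc k a0) + f (sc k a0)) = sc (k * c - c * k) a0"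
        by (simp add: sc_add_right f_sc sc_diff_left)
      moreover have "sc (k * c - c * k) a0 \<in> A" using a0 sA sub_sc by blast
      moreover have "sc k (sc c a0 + f a0) - (sc c (sc k a0) + f (sc k a0)) \<in> X"
        using sub_diff[OF sX 2 1] .
      ultimately have "sc (k * c - c * k) a0 = 0" using AX by metis
      thus ?thesis using sc_eq_0[of "k * c - c * k" a0] a0 by auto
    qed
  qed
  have "X = W c"
  proof
    show "W c \<subseteq> X"
    proof
      fix v assume "v \<in> W c"
      then obtain a where "a \<in> A" "v = sc c a + f a" unfolding W_mem by blast
      thus "v \<in> X" using all0 unfolding P_def by blast
    qed
    show "X \<subseteq> W c"
    proof
      fix x assume x: "x \<in> X"
      obtain a b where ab: "a \<in> A" "b \<in> B" "x = a + b" using dAB unfolding distant_def by blast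
      obtain a2 where a2: "a2 \<in> A" "f a2 = b" using f_surj ab by blast
      have "x - (sc c a2 + f a2) \<in> X" using x all0[OF a2(1)] sX sub_diff unfolding P_def by blast
      moreover have "x - (sc c a2 + f a2) = a - sc c a2" using ab a2 by simp
      moreover have "a - sc c a2 \<in> A" using ab a2 sA sub_sc sub_diff by blast
      ultimately have "a - sc c a2 = 0" using AX by metis
      hence "x = sc c a2 + f a2" using ab a2 by simp
      thus "x \<in> W c" using a2 W_mem by blast
    qed
  qed
  thus ?thesis using cen by blast
qed

definition pA where "pA v = (SOME a. a \<in> A \<and> v - a \<in> B)"

lemma pA_prop: "pA v \<in> A \<and> v - pA v \<in> B"
proof -
  obtain a b where "a \<in> A" "b \<in> B" "v = a + b" using dAB unfolding distant_def by blast
  hence "\<exists>a. a \<in> A \<and> v - a \<in> B" by (intro exI[of _ a]) simp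
  thus ?thesis unfolding pA_def by (rule someI_ex)
qed

lemma pA_char: assumes "a \<in> A" "v - a \<in> B" shows "pA v = a"
proof -
  have "pA v + (v - pA v) = a + (v - a)" by simp
  thus ?thesis using decomp pA_prop assms by blast
qed

lemma pA_add: "pA (x + y) = pA x + pA y"
proof (rule pA_char)
  show "pA x + pA y \<in> A" using pA_prop sA sub_add by blast
  have "(x - pA x) + (y - pA y) \<in> B" using pA_prop sB sub_add by blast
  thus "x + y - (pA x + pA y) \<in> B" by (simp add: algebra_simps)
qed

lemma pA_sc: "pA (sc k x) = sc k (pA x)"
proof (rule pA_char)
  show "sc k (pA x) \<in> A" using pA_prop sA sub_sc by blast
  have "sc k (x - pA x) \<in> B" using pA_prop sB sub_sc by blast
  thus "sc k x - sc k (pA x) \<in> B" by (simp add: sc_diff_right)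
qed

lemma W_Gset:
  assumes W1: "W 1 \<in> Gset sc" and c: "c \<in> centre" "c \<noteq> 0"
  shows "W c \<in> Gset sc"
proof -
  define \<sigma> where "\<sigma> v = sc c (pA v) + (v - pA v)" for v
  have add: "\<sigma> (x + y) = \<sigma> x + \<sigma> y" for x y unfolding \<sigma>_def pA_add
    by (simp add: sc_add_right algebra_simps)
  have hom: "\<sigma> (sc k x) = sc k (\<sigma> x)" for k x unfolding \<sigma>_def pA_sc
    using centre_comm[OF c(1)] by (simp add: sc_add_right sc_diff_right)
  have z: "v = 0" if "\<sigma> v = 0" for v
  proof -
    have "sc c (pA v) + (v - pA v) = 0 + 0" using that unfolding \<sigma>_def by simp
    hence "sc c (pA v) = 0 \<and> v - pA v = 0"
      using decomp[of "sc c (pA v)" 0 "v - pA v" 0] pA_prop sA sB sub_sc sub_0 by blast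
    thus ?thesis using c(2) sc_eq_0[of c "pA v"] by force
  qed
  have "inj \<sigma>"
  proof (rule injI)
    fix x y assume "\<sigma> x = \<sigma> y"
    hence "\<sigma> (x - y) + \<sigma> y = \<sigma> y + 0" using add[of "x - y" y] by simp
    hence "\<sigma> (x - y) = 0" by simp
    thus "x = y" using z by fastforce
  qed
  moreover have "surj \<sigma>"
  proof (rule surjI)
    fix v
    let ?x = "sc (inverse c) (pA v) + (v - pA v)"
    have "pA ?x = sc (inverse c) (pA v)" using pA_prop sA sub_sc by (intro pA_char) auto
    thus "\<sigma> ?x = v" unfolding \<sigma>_def using c(2) by simp
  qed
  ultimately have bij: "bij \<sigma>" by (simp add: bij_def)
  have "\<sigma> ` W 1 = W c"
  proof -
    have e: "\<sigma> (sc 1 a + f a) = sc c a + f a" if "a \<in> A" for a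
    proof -
      have "pA (a + f a) = a" using that f_in by (intro pA_char) auto
      thus ?thesis unfolding \<sigma>_def by simp
    qed
    show ?thesis
    proof
      show "\<sigma> ` W 1 \<subseteq> W c"
      proof
        fix z assume "z \<in> \<sigma> ` W 1"
        then obtain v where v: "v \<in> W 1" "z = \<sigma> v" by blast
        then obtain a where a: "a \<in> A" "z = \<sigma> (sc 1 a + f a)" unfolding W_mem by blast
        thus "z \<in> W c" using e[OF a(1)] W_memI by simp
      qed
      show "W c \<subseteq> \<sigma> ` W 1"
      proof
        fix z assume "z \<in> W c"
        then obtain a where a: "a \<in> A" "z = sc c a + f a" unfolding W_mem by blast
        hence "z = \<sigma> (sc 1 a + f a)" using e by simp
        moreover have "sc 1 a + f a \<in> W 1" using W_memI a by blast
        ultimately show "z \<in> \<sigma> ` W 1" by blast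
      qed
    qed
  qed
  thus ?thesis using Gset_transfer[OF W1 add hom bij] by simp
qed

end


lemma centre_inverse: assumes "y \<in> centre" shows "inverse y \<in> centre"
  unfolding centre_def
proof safe
  fix k :: 'a
  show "inverse y * k = k * inverse y"
  proof (cases "y = 0")
    case True thus ?thesis by simp
  next
    case False
    have yk: "y * k = k * y" using assms unfolding centre_def by blast
    have "inverse y * k = inverse y * k * (y * inverse y)" using False by simp
    also have "\<dots> = inverse y * (k * y) * inverse y" by (simp add: mult.assoc)
    also have "\<dots> = inverse y * (y * k) * inverse y" using yk by simp
    also have "\<dots> = k * inverse y" using False by (simp add: mult.assoc[symmetric])
    finally show ?thesis .
  qed
qed

lemma centre_mult: assumes "x \<in> centre" "y \<in> centre" shows "x * y \<in> centre"
  unfolding centre_def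
proof safe
  fix k
  have xk: "x * k = k * x" and yk: "y * k = k * y" using assms unfolding centre_def by blast+
  have "x * y * k = x * (k * y)" by (simp add: mult.assoc yk)
  also have "\<dots> = (x * k) * y" by (simp add: mult.assoc)
  also have "\<dots> = k * (x * y)" by (simp add: xk mult.assoc)
  finally show "x * y * k = k * (x * y)" .
qed

lemma centre_01: "0 \<in> centre" "1 \<in> centre" unfolding centre_def by simp_all

context frame
begin

lemma indep_f: assumes "a \<in> A" "a \<noteq> 0" shows "indep2 sc a (f a)"
  unfolding indep2_def
proof (intro allI impI)
  fix x y assume h: "sc x a + sc y (f a) = 0"
  have "sc x a + sc y (f a) = 0 + 0" using h by simp
  hence "sc x a = 0 \<and> sc y (f a) = 0"
    using decomp[OF sub_sc[OF sA assms(1)] sub_0[OF sA] sub_sc[OF sB f_in[OF assms(1)]] sub_0[OF sB]] by blast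
  moreover have "f a \<noteq> 0" using f_inj assms by blast
  ultimately show "x = 0 \<and> y = 0" using assms sc_eq_0 by blast
qed

lemma dimA:
  assumes dim: "dim_gt_2 sc" and a0: "a0 \<in> A" "a0 \<noteq> 0"
  shows "\<exists>a'\<in>A. indep2 sc a0 a'"
proof (rule ccontr)
  assume no: "\<not> (\<exists>a'\<in>A. indep2 sc a0 a')"
  have dep: "\<exists>k. a = sc k a0" if a: "a \<in> A" for a
  proof -
    obtain x y where xy: "sc x a0 + sc y a = 0" "\<not> (x = 0 \<and> y = 0)"
      using no a unfolding indep2_def by blast
    have "y \<noteq> 0"
    proof
      assume "y = 0" hence "sc x a0 = 0" using xy by simp
      thus False using xy a0 sc_eq_0 \<open>y = 0\<close> by blast
    qed
    have "sc y a = - sc x a0" using xy by (simp add: add_eq_0_iff)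
    hence "sc (inverse y) (sc y a) = sc (inverse y) (- sc x a0)" by simp
    hence "a = sc (- (inverse y * x)) a0" using \<open>y \<noteq> 0\<close> by (simp add: sc_minus_right sc_minus_left)
    thus ?thesis by blast
  qed
  have all: "v \<in> span2 sc a0 (f a0)" for v
  proof -
    obtain a b where ab: "a \<in> A" "b \<in> B" "v = a + b" using dAB unfolding distant_def by blast
    obtain a2 where a2: "a2 \<in> A" "f a2 = b" using f_surj ab by blast
    obtain k where k: "a = sc k a0" using dep ab by blast
    obtain k2 where k2: "a2 = sc k2 a0" using dep a2 by blast
    have "v = sc k a0 + sc k2 (f a0)" using ab a2 k k2 by (simp add: f_sc)
    thus ?thesis unfolding span2_mem by blast
  qed
  obtain u v w where uvw: "\<forall>a b c. sc a u + sc b v + sc c w = 0 \<longrightarrow> a = 0 \<and> b = 0 \<and> c = 0"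
    using dim unfolding dim_gt_2_def by blast
  show False using three_in_two[OF all all all] uvw by blast
qed

end

theorem corollary4p7:
  fixes sc :: "'k::division_ring \<Rightarrow> 'v::ab_group_add \<Rightarrow> 'v"
    and R :: "'v set set" and L :: "'v set"
  assumes "left_vs sc"
    and "dim_gt_2 sc"
    and "Gset sc \<noteq> {}"
    and "Z_regulus sc R"
    and "directrix sc R L"
  shows "Z_subline sc L {P. is_point sc P \<and> P \<subseteq> L \<and> (\<exists>X\<in>R. P \<subseteq> X)}"
proof -
  interpret lvs sc by unfold_locales (rule assms(1))
  have RG: "R \<subseteq> Gset sc" and R1: "R1 sc R" and R2: "R2 sc R"
    and max: "\<not> (\<exists>R'. R \<subset> R' \<and> R' \<subseteq> Gset sc \<and> R1 sc R' \<and> R2 sc R')"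
    using assms(4) unfolding Z_regulus_def by auto
  have Gsub: "X \<in> Gset sc \<Longrightarrow> lvs_subspace sc X" for X unfolding Gset_def by blast
  have Rsub: "X \<in> R \<Longrightarrow> lvs_subspace sc X" for X using RG Gsub by blast
  have Rdist: "X \<in> R \<Longrightarrow> Y \<in> R \<Longrightarrow> X \<noteq> Y \<Longrightarrow> distant X Y" for X Y
    using R1 unfolding R1_def by blast
  obtain A B C where ABC: "A \<in> R" "B \<in> R" "C \<in> R" "A \<noteq> B" "A \<noteq> C" "B \<noteq> C"
    using R1 unfolding R1_def by blast
  obtain f where fr: "frame sc A B f" and Ceq: "C = {a + f a | a. a \<in> A}"
    using frame_exists[OF Rsub[OF ABC(1)] Rsub[OF ABC(2)] Rsub[OF ABC(3)]
        Rdist[OF ABC(1,2,4)] Rdist[OF ABC(1,3,5)] Rdist[OF ABC(2,3,6)]] by blast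
  interpret frame sc A B f by (rule fr)
  have C1: "C = W 1" unfolding Ceq W_def by simp
  have B0: "B = W 0" using W0 by simp
  have famA: "fam A" and famB: "fam B" and famC: "fam C"
    unfolding fam_def using B0 C1 centre_01 by blast+
  have lineR: "meets sc (span2 sc a (f a)) X" if X: "X \<in> R" and a: "a \<in> A" "a \<noteq> 0" for X a
  proof -
    have line: "is_line sc (span2 sc a (f a))" unfolding is_line_def using indep_f[OF a] by blast
    have u: "a \<in> span2 sc a (f a)" "f a \<in> span2 sc a (f a)" using span2_a span2_b by blast+
    have m: "meets sc (span2 sc a (f a)) A" "meets sc (span2 sc a (f a)) B" "meets sc (span2 sc a (f a)) C"
      using meets_all[OF line a u] famA famB famC by blast+
    have "\<forall>X\<in>R. meets sc (span2 sc a (f a)) X"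
      using R2 line ABC m unfolding R2_def by blast
    thus ?thesis using X by blast
  qed
  have Lline: "is_line sc L" and LR: "\<forall>X\<in>R. meets sc L X"
    using assms(5) unfolding directrix_def by auto
  have sL: "lvs_subspace sc L" using line_sub Lline by blast
  obtain u where u: "u \<in> A" "u \<noteq> 0" "u \<in> L" "f u \<in> L"
    using fam_three[OF Lline famA famB famC ABC(4-6)] LR ABC by blast
  have ind0: "indep2 sc u (f u)" using indep_f u by blast
  have Leq: "L = span2 sc u (f u)" using line_eq[OF Lline u(3,4) ind0] .
  obtain a' where a': "a' \<in> A" "indep2 sc u a'" using dimA[OF assms(2) u(1,2)] by blast
  have charR: "fam X" if X: "X \<in> R" for X
  proof (cases "X = A")
    case True thus ?thesis by (simp add: fam_def)
  next
    case False
    have "A \<noteq> X" using False by blast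
    hence "distant A X" using Rdist[OF ABC(1) X] by blast
    hence "\<exists>c\<in>centre. X = W c" using char[OF Rsub[OF X] _ lineR[OF X] u(1,2) a'] by blast
    thus ?thesis unfolding fam_def by blast
  qed
  have inR: "W c \<in> R" if c: "c \<in> centre" for c
  proof (rule ccontr)
    assume nR: "W c \<notin> R"
    have cnz: "c \<noteq> 0" using nR B0 ABC(2) by auto
    define R' where "R' = insert (W c) R"
    have famR': "fam X" if "X \<in> R'" for X using that charR c unfolding R'_def fam_def by blast
    have "W c \<in> Gset sc" using W_Gset[OF _ c cnz] C1 ABC(3) RG by blast
    hence G': "R' \<subseteq> Gset sc" using RG unfolding R'_def by blast
    have R1': "R1 sc R'" unfolding R1_def
    proof
      show "\<forall>X\<in>R'. \<forall>Y\<in>R'. X \<noteq> Y \<longrightarrow> distant X Y" using fam_distant famR' by blast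
      show "\<exists>A B C. A \<in> R' \<and> B \<in> R' \<and> C \<in> R' \<and> A \<noteq> B \<and> A \<noteq> C \<and> B \<noteq> C"
        using ABC unfolding R'_def by blast
    qed
    have R2': "R2 sc R'" unfolding R2_def
    proof (intro allI impI ballI)
      fix M X assume M: "is_line sc M" and X: "X \<in> R'"
        and ex: "\<exists>A B C. A \<in> R' \<and> B \<in> R' \<and> C \<in> R' \<and> A \<noteq> B \<and> A \<noteq> C \<and> B \<noteq> C \<and>
               meets sc M A \<and> meets sc M B \<and> meets sc M C"
      then obtain X1 X2 X3 where X123: "X1 \<in> R'" "X2 \<in> R'" "X3 \<in> R'" "X1 \<noteq> X2" "X1 \<noteq> X3" "X2 \<noteq> X3"
        "meets sc M X1" "meets sc M X2" "meets sc M X3" by blast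
      obtain w where "w \<in> A" "w \<noteq> 0" "w \<in> M" "f w \<in> M"
        using fam_three[OF M famR'[OF X123(1)] famR'[OF X123(2)] famR'[OF X123(3)] X123(4-9)] by blast
      thus "meets sc M X" using meets_all[OF M] famR'[OF X] by blast
    qed
    have "R \<subset> R'" using nR unfolding R'_def by blast
    thus False using max G' R1' R2' by blast
  qed
  show ?thesis unfolding Z_subline_def
  proof (intro exI conjI)
    show "indep2 sc u (f u)" by (rule ind0)
    show "L = span2 sc u (f u)" by (rule Leq)
    show "{P. is_point sc P \<and> P \<subseteq> L \<and> (\<exists>X\<in>R. P \<subseteq> X)} =
      {pt_of sc (sc x u + sc y (f u)) | x y. x \<in> centre \<and> y \<in> centre \<and> (x, y) \<noteq> (0, 0)}"
    proof
      show "{P. is_point sc P \<and> P \<subseteq> L \<and> (\<exists>X\<in>R. P \<subseteq> X)} \<subseteq>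
        {pt_of sc (sc x u + sc y (f u)) | x y. x \<in> centre \<and> y \<in> centre \<and> (x, y) \<noteq> (0, 0)}"
      proof
        fix P assume "P \<in> {P. is_point sc P \<and> P \<subseteq> L \<and> (\<exists>X\<in>R. P \<subseteq> X)}"
        then obtain v X where v: "v \<noteq> 0" "P = pt_of sc v" "P \<subseteq> L" "X \<in> R" "P \<subseteq> X"
          unfolding is_point_def by blast
        have vL: "v \<in> L" "v \<in> X" using v pt_mem by blast+
        obtain x y where vxy: "v = sc x u + sc y (f u)" using vL(1) unfolding Leq span2_mem by blast
        show "P \<in> {pt_of sc (sc x u + sc y (f u)) | x y. x \<in> centre \<and> y \<in> centre \<and> (x, y) \<noteq> (0, 0)}"
        proof (cases "X = A")
          case True
          have "sc x u + f (sc y u) = v + 0" using vxy by (simp add: f_sc)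
          hence "f (sc y u) = 0"
            using decomp[OF sub_sc[OF sA u(1)] _ f_in[OF sub_sc[OF sA u(1)]] sub_0[OF sB]] vL(2) True
            by blast
          hence "sc y u = 0" using f_inj sub_sc[OF sA u(1)] by blast
          hence "y = 0" using sc_eq_0 u(2) by blast
          hence "v = sc x u" using vxy by simp
          hence "x \<noteq> 0" using v(1) by auto
          hence "P = pt_of sc (sc 1 u + sc 0 (f u))" using v(2) \<open>v = sc x u\<close> pt_scale by simp
          moreover have "(1::'k, 0::'k) \<noteq> (0, 0)" by simp
          ultimately show ?thesis using centre_01 by blast
        next
          case False
          then obtain c where c: "c \<in> centre" "X = W c" using charR[OF v(4)] unfolding fam_def by blast
          obtain a where a: "a \<in> A" "v = sc c a + f a" using vL(2) c W_mem by blast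
          have "sc x u + f (sc y u) = sc c a + f a" using vxy a by (simp add: f_sc)
          hence "sc x u = sc c a \<and> f (sc y u) = f a"
            using decomp[OF sub_sc[OF sA u(1)] sub_sc[OF sA a(1)] f_in[OF sub_sc[OF sA u(1)]] f_in[OF a(1)]]
            by blast
          hence e1: "sc x u = sc c a" and e2: "a = sc y u" using f_inj2 sub_sc[OF sA u(1)] a(1) by metis+
          have "sc x u = sc (y * c) u" using e1 e2 centre_comm[OF c(1)] by simp
          hence "x = y * c" using sc_cancel_left u(2) by blast
          hence vy: "v = sc y (sc c u + sc 1 (f u))" using vxy by (simp add: sc_add_right)
          have "y \<noteq> 0" using v(1) vy by auto
          hence "P = pt_of sc (sc c u + sc 1 (f u))" using v(2) vy pt_scale by simp
          moreover have "(c, 1::'k) \<noteq> (0, 0)" by simp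
          ultimately show ?thesis using c(1) centre_01 by blast
        qed
      qed
      show "{pt_of sc (sc x u + sc y (f u)) | x y. x \<in> centre \<and> y \<in> centre \<and> (x, y) \<noteq> (0, 0)}
        \<subseteq> {P. is_point sc P \<and> P \<subseteq> L \<and> (\<exists>X\<in>R. P \<subseteq> X)}"
      proof
        fix P assume "P \<in> {pt_of sc (sc x u + sc y (f u)) | x y. x \<in> centre \<and> y \<in> centre \<and> (x, y) \<noteq> (0, 0)}"
        then obtain x y where xy: "x \<in> centre" "y \<in> centre" "(x, y) \<noteq> (0, 0)"
          "P = pt_of sc (sc x u + sc y (f u))" by blast
        let ?v = "sc x u + sc y (f u)"
        have vnz: "?v \<noteq> 0" using ind0 xy(3) unfolding indep2_def by auto
        have vL: "?v \<in> L" unfolding Leq span2_mem by blast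
        have "\<exists>X\<in>R. ?v \<in> X"
        proof (cases "y = 0")
          case True
          hence "?v \<in> A" using u sA sub_sc by simp
          thus ?thesis using ABC(1) by blast
        next
          case False
          define c where "c = inverse y * x"
          have cc: "c \<in> centre" unfolding c_def using centre_mult centre_inverse xy by blast
          have "?v = sc y (sc c u + f u)" using False unfolding c_def
            by (simp add: sc_add_right mult.assoc[symmetric])
          moreover have "sc c u + f u \<in> W c" using W_memI u by blast
          ultimately have "?v \<in> W c" using W_sub[OF cc] sub_sc by metis
          thus ?thesis using inR[OF cc] by blast
        qed
        then obtain X where X: "X \<in> R" "?v \<in> X" by blast
        have "is_point sc P" "P \<subseteq> L" "P \<subseteq> X"
          using xy(4) pt_point[OF vnz] pt_sub[OF sL vL] pt_sub[OF Rsub[OF X(1)] X(2)] by auto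
        thus "P \<in> {P. is_point sc P \<and> P \<subseteq> L \<and> (\<exists>X\<in>R. P \<subseteq> X)}" using X by blast
      qed
    qed
  qed
qed

end
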